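(* In the setting below, suppose the persistent excitation assumption and the inexact disturbance bound assumption hold, and let $\Theta_t=\Theta_0\cap\bigcap_{j=1}^t\Delta_j$. Then for every $\epsilon>0$, every $\theta\in\Theta_0$ with $\|\theta-\theta^\ast\|\ge\epsilon+\rho\sqrt{N_u/\beta}$, and every $t\in\mathbb{N}_{\ge0}$, $$\Pr\{\theta\in\Theta_t\}\ \le\ \Bigl[1-p_w\bigl(\epsilon\sqrt{\beta/N_u}\bigr)\Bigr]^{\lfloor t/N_u\rfloor}.$$
   Context: Setting: $\theta^\ast\in\mathbb{R}^p$ is a fixed (unknown) parameter vector. $\Theta_0\subset\mathbb{R}^p$ is a compact convex polytope containing $\theta^\ast$. $\mathcal{W}=\{w\in\mathbb{R}^{n_x}:\Pi_w w\le\pi_w\}$ is a compact convex polytope with $\pi_w>0$. The disturbances $w_0,w_1,\dots$ are independent random vectors in $\mathbb{R}^{n_x}$. $D_0,D_1,\dots\in\mathbb{R}^{n_x\times p}$ is a given (non-random) sequence of regressor matrices. For $t\ge1$ the (random) unfalsified parameter set is $\Delta_t=\{\theta\in\mathbb{R}^p: D_{t-1}(\theta^\ast-\theta)+w_{t-1}\in\mathcal{W}\}$. $\|\cdot\|$ is the Euclidean norm (induced 2-norm for matrices); $\mathcal{B}=\{x\in\mathbb{R}^{n_x}:\|x\|\le1\}$; $\oplus$ is Minkowski sum. Persistent excitation assumption: there exist $\tau>0$, $\beta>0$ and an integer $N_u\ge\lceil p/n_x\rceil$ such that for every $t\ge0$, $\|D_t\|\le\tau$ and $\sum_{j=t}^{t+N_u-1}D_j^\top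 D_j\succeq\beta I$. Inexact disturbance bound assumption: there exist a compact set $\Omega\subset\mathbb{R}^{n_x}$ and $\rho>0$ with $\Omega\subseteq\mathcal{W}\subseteq\Omega\oplus\rho\mathcal{B}$, such that $w_t\in\Omega$ for all $t$, and a function $p_w:(0,\infty)\to(0,1]$ such that for all $w^0\in\partial\Omega$ (boundary of $\Omega$), all $\epsilon>0$ and all $t\ge0$, $\Pr\{\|w_t-w^0\|<\epsilon\}\ge p_w(\epsilon)$. *)

theory Defs
  imports "HOL-Analysis.Analysis" "HOL-Probability.Probability"
begin

definition hpoly :: "real^'n^'m \<Rightarrow> real^'m \<Rightarrow> (real^'n) set" where
  "hpoly Pw pw = {x. \<forall>i. (Pw *v x) $ i \<le> pw $ i}"

text \<open>Unfalsified parameter set Delta_t (t >= 1), for a fixed outcome of the disturbances.\<close>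
definition unfalsified ::
  "(nat \<Rightarrow> real^'p^'n) \<Rightarrow> real^'p \<Rightarrow> (nat \<Rightarrow> real^'n) \<Rightarrow> (real^'n) set \<Rightarrow> nat \<Rightarrow> (real^'p) set" where
  "unfalsified D thstar wseq W t = {\<theta>. D (t - 1) *v (thstar - \<theta>) + wseq (t - 1) \<in> W}"

definition param_set ::
  "(real^'p) set \<Rightarrow> (nat \<Rightarrow> real^'p^'n) \<Rightarrow> real^'p \<Rightarrow> (nat \<Rightarrow> real^'n) \<Rightarrow> (real^'n) set \<Rightarrow> nat \<Rightarrow> (real^'p) set" where
  "param_set Th0 D thstar wseq W t = Th0 \<inter> (\<Inter>j\<in>{1..t}. unfalsified D thstar wseq W j)"

end

theory Submission imports Defs begin

lemma sum_mat_vec: "(sum f S) *v (x::real^'a) = (\<Sum>j\<in>S. (f j :: real^'a^'b) *v x)"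
proof (cases "finite S")
  case True then show ?thesis
    by (induction S rule: finite_induct) (auto simp: matrix_vector_mult_add_rdistrib)
qed simp

lemma quad_form: "((transpose A ** A) *v x) \<bullet> x = norm ((A::real^'a^'b) *v x)^2"
  by (simp add: matrix_vector_mul_assoc[symmetric] dot_lmul_matrix power2_norm_eq_inner)

lemma exists_ge_avg:
  fixes f :: "nat \<Rightarrow> real"
  assumes "finite S" "S \<noteq> {}" "sum f S \<ge> c"
  shows "\<exists>j\<in>S. f j \<ge> c / card S"
proof (rule ccontr)
  assume "\<not> ?thesis"
  then have "\<forall>j\<in>S. f j < c / card S" by auto
  then have "sum f S < (\<Sum>j\<in>S. c / card S)"
    using assms by (intro sum_strict_mono) auto
  also have "\<dots> = c" using assms by simp
  finally show False using assms by simp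
qed

lemma step_bound:
  fixes M :: "'w measure" and X :: "'w \<Rightarrow> real^'n" and v :: "real^'n"
  assumes ps: "prob_space M" and Xm: "X \<in> borel_measurable M" and cO: "compact \<Omega>"
    and XO: "\<forall>\<omega>\<in>space M. X \<omega> \<in> \<Omega>"
    and WO: "W \<subseteq> {a + b | a b. a \<in> \<Omega> \<and> b \<in> cball 0 \<rho>}"
    and fr: "\<forall>w0\<in>frontier \<Omega>. measure M {\<omega>\<in>space M. norm (X \<omega> - w0) < e} \<ge> q"
    and e: "e > 0" and rho: "\<rho> > 0" and nv: "norm v \<ge> e + \<rho>"
  shows "measure M {\<omega>\<in>space M. v + X \<omega> \<in> W} \<le> 1 - q"
proof -
  interpret prob_space M by (rule ps)
  have "space M \<noteq> {}" by (rule not_empty)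
  then have ne: "\<Omega> \<noteq> {}" using XO by auto
  have "continuous_on \<Omega> (\<lambda>y. v \<bullet> y)" by (intro continuous_intros)
  then obtain w0 where w0: "w0 \<in> \<Omega>" and mx: "\<forall>y\<in>\<Omega>. v \<bullet> y \<le> v \<bullet> w0"
    using continuous_attains_sup[OF cO ne] by blast
  have vpos: "norm v > 0" using nv e rho by linarith
  have "w0 \<notin> interior \<Omega>"
  proof
    assume "w0 \<in> interior \<Omega>"
    then obtain r where r: "r > 0" "ball w0 r \<subseteq> \<Omega>" using mem_interior by blast
    define y where "y = w0 + ((r/2) / norm v) *\<^sub>R v"
    have "dist w0 y = r/2" using vpos r by (simp add: y_def dist_norm)
    then have yO: "y \<in> \<Omega>" using r by auto
    have vv: "v \<bullet> v = norm v * norm v" by (metis power2_norm_eq_inner power2_eq_square)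
    have "v \<bullet> y = v \<bullet> w0 + ((r/2) / norm v) * (v \<bullet> v)"
      by (simp add: y_def inner_add_right)
    also have "\<dots> = v \<bullet> w0 + (r/2) * norm v" using vpos by (simp add: vv)
    finally have eq: "v \<bullet> y = v \<bullet> w0 + (r/2) * norm v" .
    have "(r/2) * norm v > 0" using r vpos by simp
    then show False using mx yO eq by (metis add_le_same_cancel1 not_le)
  qed
  then have wf: "w0 \<in> frontier \<Omega>" using w0 closure_subset by (auto simp: frontier_def)
  define B where "B = {\<omega>\<in>space M. norm (X \<omega> - w0) < e}"
  have Bm: "B \<in> events" unfolding B_def using Xm by measurable
  have sub: "{\<omega>\<in>space M. v + X \<omega> \<in> W} \<subseteq> space M - B"
  proof
    fix \<omega> assume "\<omega> \<in> {\<omega>\<in>space M. v + X \<omega> \<in> W}"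
    then have om: "\<omega> \<in> space M" and inW: "v + X \<omega> \<in> W" by auto
    then obtain a b where ab: "v + X \<omega> = a + b" "a \<in> \<Omega>" "norm b \<le> \<rho>" using WO by auto
    have "v \<bullet> (v + X \<omega>) = v \<bullet> a + v \<bullet> b" by (simp add: ab inner_add_right)
    also have "\<dots> \<le> v \<bullet> w0 + norm v * \<rho>"
      using mx ab norm_cauchy_schwarz[of v b] mult_left_mono[OF ab(3), of "norm v"] by force
    finally have up: "v \<bullet> (v + X \<omega>) \<le> v \<bullet> w0 + norm v * \<rho>" .
    show "\<omega> \<in> space M - B"
    proof (rule ccontr)
      assume "\<omega> \<notin> space M - B"
      then have lt: "norm (X \<omega> - w0) < e" using om B_def by auto
      have "- (v \<bullet> (X \<omega> - w0)) \<le> norm v * norm (X \<omega> - w0)"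
        using norm_cauchy_schwarz[of "-v" "X \<omega> - w0"] by simp
      also have "\<dots> < norm v * e" using lt vpos by simp
      finally have "v \<bullet> X \<omega> > v \<bullet> w0 - norm v * e" by (simp add: inner_diff_right)
      moreover have "v \<bullet> (v + X \<omega>) = norm v ^ 2 + v \<bullet> X \<omega>"
        by (simp add: inner_add_right power2_norm_eq_inner)
      ultimately have "norm v ^ 2 < norm v * (e + \<rho>)" using up by (simp add: algebra_simps)
      then have "norm v < e + \<rho>" using vpos by (simp add: power2_eq_square)
      then show False using nv by simp
    qed
  qed
  have "measure M {\<omega>\<in>space M. v + X \<omega> \<in> W} \<le> measure M (space M - B)"
    using sub Bm by (intro finite_measure_mono) auto
  also have "\<dots> = 1 - measure M B" using Bm by (simp add: prob_compl)
  also have "\<dots> \<le> 1 - q" using fr wf B_def by auto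
  finally show ?thesis .
qed
theorem theorem4:
  fixes M :: "'w measure"
    and w :: "nat \<Rightarrow> 'w \<Rightarrow> real^'n"
    and D :: "nat \<Rightarrow> real^'p^'n"
    and thstar :: "real^'p"
    and Th0 :: "(real^'p) set"
    and Pw :: "real^'n^'m" and pw :: "real^'m"
    and \<Omega> :: "(real^'n) set"
    and \<rho> \<tau> \<beta> :: real and Nu :: nat
    and p_w :: "real \<Rightarrow> real"
    and \<epsilon> :: real and \<theta> :: "real^'p" and t :: nat
  assumes "prob_space M"
    and "\<And>k. w k \<in> borel_measurable M"
    and "prob_space.indep_vars M (\<lambda>_. borel) w UNIV"
    and "polytope Th0" and "compact Th0" and "convex Th0" and "thstar \<in> Th0"
    and "compact (hpoly Pw pw)" and "\<forall>i. pw $ i > 0"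
    \<comment> \<open>persistent excitation\<close>
    and "\<tau> > 0" and "\<beta> > 0"
    and "Nu \<ge> nat \<lceil>real CARD('p) / real CARD('n)\<rceil>"
    and "\<forall>k. onorm (\<lambda>x. D k *v x) \<le> \<tau>"
    and "\<forall>k. \<forall>x. ((\<Sum>j\<in>{k..k + Nu - 1}. transpose (D j) ** D j) *v x) \<bullet> x \<ge> \<beta> * (x \<bullet> x)"
    \<comment> \<open>inexact disturbance bound\<close>
    and "compact \<Omega>" and "\<rho> > 0"
    and "\<Omega> \<subseteq> hpoly Pw pw"
    and "hpoly Pw pw \<subseteq> {a + b | a b. a \<in> \<Omega> \<and> b \<in> cball 0 \<rho>}"
    and "\<forall>k. \<forall>\<omega>\<in>space M. w k \<omega> \<in> \<Omega>"
    and "\<forall>e>0. 0 < p_w e \<and> p_w e \<le> 1"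
    and "\<forall>w0\<in>frontier \<Omega>. \<forall>e>0. \<forall>k.
           measure M {\<omega>\<in>space M. norm (w k \<omega> - w0) < e} \<ge> p_w e"
    \<comment> \<open>the claim's data\<close>
    and "\<epsilon> > 0" and "\<theta> \<in> Th0"
    and "norm (\<theta> - thstar) \<ge> \<epsilon> + \<rho> * sqrt (real Nu / \<beta>)"
  shows "measure M {\<omega>\<in>space M. \<theta> \<in> param_set Th0 D thstar (\<lambda>k. w k \<omega>) (hpoly Pw pw) t}
           \<le> (1 - p_w (\<epsilon> * sqrt (\<beta> / real Nu))) ^ (t div Nu)"
proof -
  note A = assms
  interpret P: prob_space M by (rule A(1))
  define W where "W = hpoly Pw pw"
  define x where "x = thstar - \<theta>"
  define e' where "e' = \<epsilon> * sqrt (\<beta> / real Nu)"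
  define K where "K = t div Nu"
  have "real CARD('p) / real CARD('n) > 0" by simp
  then have "\<lceil>real CARD('p) / real CARD('n)\<rceil> \<ge> 1" by linarith
  then have Nu1: "Nu \<ge> 1" using A(12) by linarith
  have e'pos: "e' > 0" unfolding e'_def using A(11) A(22) Nu1 by simp
  have nx: "norm x \<ge> \<epsilon> + \<rho> * sqrt (real Nu / \<beta>)"
    using A(24) by (simp add: x_def norm_minus_commute)
  have win: "\<exists>j\<in>{i*Nu..i*Nu+Nu-1}. norm (D j *v x) \<ge> e' + \<rho>" for i
  proof -
    define S where "S = {i*Nu..i*Nu+Nu-1}"
    have cS: "card S = Nu" unfolding S_def using Nu1 by simp
    have fS: "finite S" "S \<noteq> {}" unfolding S_def using Nu1 by auto
    have "(\<Sum>j\<in>S. norm (D j *v x)^2) = ((\<Sum>j\<in>S. transpose (D j) ** D j) *v x) \<bullet> x"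
      by (simp add: sum_mat_vec inner_sum_left quad_form)
    also have "\<dots> \<ge> \<beta> * (x \<bullet> x)" unfolding S_def by (rule A(14)[rule_format])
    finally obtain j where j: "j \<in> S" "norm (D j *v x)^2 \<ge> \<beta> * (x \<bullet> x) / Nu"
      using exists_ge_avg[OF fS, of "\<beta> * (x \<bullet> x)"] cS by auto
    have bnn: "\<beta> / Nu \<ge> 0" using A(11) by simp
    have "(sqrt (\<beta> / Nu) * norm x)^2 = (\<beta> / Nu) * (x \<bullet> x)"
      by (simp only: power_mult_distrib real_sqrt_pow2[OF bnn] power2_norm_eq_inner)
    then have eqq: "\<beta> * (x \<bullet> x) / Nu = (sqrt (\<beta> / Nu) * norm x)^2" by simp
    have h2: "(sqrt (\<beta> / Nu) * norm x)^2 \<le> norm (D j *v x)^2" using j(2) eqq by linarith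
    have "norm (D j *v x) \<ge> sqrt (\<beta> / Nu) * norm x"
      by (rule power2_le_imp_le[OF h2 norm_ge_zero])
    moreover have "sqrt (\<beta> / Nu) * norm x \<ge> sqrt (\<beta> / Nu) * (\<epsilon> + \<rho> * sqrt (real Nu / \<beta>))"
      using nx bnn by (intro mult_left_mono) auto
    moreover have "sqrt (\<beta> / Nu) * (\<epsilon> + \<rho> * sqrt (real Nu / \<beta>)) = e' + \<rho>"
    proof -
      have "sqrt (\<beta> / Nu) * sqrt (real Nu / \<beta>) = 1"
      proof -
        have "(\<beta> / Nu) * (real Nu / \<beta>) = 1" using A(11) Nu1 by (simp add: field_simps)
        then show ?thesis by (simp only: real_sqrt_mult[symmetric] real_sqrt_one)
      qed
      moreover have "sqrt (\<beta> / Nu) * (\<epsilon> + \<rho> * sqrt (real Nu / \<beta>))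
          = \<epsilon> * sqrt (\<beta> / Nu) + \<rho> * (sqrt (\<beta> / Nu) * sqrt (real Nu / \<beta>))"
        by (simp only: distrib_left mult.assoc mult.left_commute mult.commute)
      ultimately show ?thesis unfolding e'_def by simp
    qed
    ultimately have "norm (D j *v x) \<ge> e' + \<rho>" by linarith
    then show ?thesis using j(1) unfolding S_def by blast
  qed
  have "\<forall>i. \<exists>j. j \<in> {i*Nu..i*Nu+Nu-1} \<and> norm (D j *v x) \<ge> e' + \<rho>" using win by blast
  then obtain g where g0: "\<forall>i. g i \<in> {i*Nu..i*Nu+Nu-1} \<and> norm (D (g i) *v x) \<ge> e' + \<rho>"
    by (rule choice[THEN exE])
  have g: "\<And>i. g i \<in> {i*Nu..i*Nu+Nu-1}" "\<And>i. norm (D (g i) *v x) \<ge> e' + \<rho>"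
    using g0 by auto
  show ?thesis
  proof (cases "K = 0")
    case True
    then show ?thesis using P.prob_le_1 by (simp add: K_def[symmetric])
  next
    case False
    define J where "J = g ` {..<K}"
    have lt: "g i < g i'" if "i < i'" for i i'
    proof -
      have "g i \<le> i*Nu+Nu-1" using g(1)[of i] by auto
      moreover have "(i+1)*Nu \<le> i'*Nu" using that by (intro mult_le_mono1) auto
      moreover have "i'*Nu \<le> g i'" using g(1)[of i'] by auto
      ultimately show ?thesis using Nu1 by (simp add: algebra_simps)
    qed
    have inj: "inj_on g {..<K}"
      by (intro inj_onI) (metis lt less_irrefl linorder_neqE_nat)
    have KNu: "K * Nu \<le> t" unfolding K_def by (simp add: div_times_less_eq_dividend)
    define Ak where "Ak k = {\<omega>\<in>space M. D k *v x + w k \<omega> \<in> W}" for k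
    have clW: "closed W" using A(8) compact_imp_closed W_def by auto
    have clk: "closed {y. D k *v x + y \<in> W}" for k
    proof -
      have "closed ((\<lambda>y. D k *v x + y) -` W)"
        by (rule closed_vimage[OF clW]) (intro continuous_intros)
      then show ?thesis by (simp add: vimage_def)
    qed
    have Akeq: "Ak k = w k -` {y. D k *v x + y \<in> W} \<inter> space M" for k
      unfolding Ak_def by auto
    have sub: "{\<omega>\<in>space M. \<theta> \<in> param_set Th0 D thstar (\<lambda>k. w k \<omega>) (hpoly Pw pw) t}
               \<subseteq> (\<Inter>k\<in>J. Ak k)"
    proof (intro subsetI INT_I)
      fix \<omega> k assume om: "\<omega> \<in> {\<omega>\<in>space M. \<theta> \<in> param_set Th0 D thstar (\<lambda>k. w k \<omega>) (hpoly Pw pw) t}"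
        and k: "k \<in> J"
      then obtain i where i: "i < K" "k = g i" unfolding J_def by auto
      have "(i+1)*Nu \<le> K*Nu" using i by (intro mult_le_mono1) auto
      then have gi: "g i + 1 \<in> {1..t}" using g(1)[of i] KNu Nu1 by (auto simp: algebra_simps)
      have "\<theta> \<in> unfalsified D thstar (\<lambda>k. w k \<omega>) (hpoly Pw pw) (g i + 1)"
        using om gi unfolding param_set_def by blast
      then have "D (g i) *v x + w (g i) \<omega> \<in> W" unfolding unfalsified_def W_def x_def by simp
      then show "\<omega> \<in> Ak k" using om i unfolding Ak_def by auto
    qed
    have ev: "Ak k \<in> P.events" for k
      unfolding Akeq by (rule measurable_sets[OF A(2)[of k]]) (rule borel_closed[OF clk])
    have memF: "Ak k \<in> {w k -` S \<inter> space M | S. S \<in> sets borel}" for k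
      using Akeq[of k] borel_closed[OF clk[of k]] by blast
    have Jne: "J \<noteq> {}" "finite J" unfolding J_def using False by auto
    have ind: "P.indep_sets (\<lambda>i. {w i -` S \<inter> space M | S. S \<in> sets borel}) UNIV"
      using A(3) unfolding P.indep_vars_def2 by auto
    have "measure M {\<omega>\<in>space M. \<theta> \<in> param_set Th0 D thstar (\<lambda>k. w k \<omega>) (hpoly Pw pw) t}
          \<le> measure M (\<Inter>k\<in>J. Ak k)"
      using sub ev Jne by (intro P.finite_measure_mono) auto
    also have "\<dots> = (\<Prod>k\<in>J. measure M (Ak k))"
      using Jne memF by (intro P.indep_setsD[OF ind]) auto
    also have "\<dots> \<le> (\<Prod>k\<in>J. 1 - p_w e')"
    proof (intro prod_mono conjI)
      fix k assume "k \<in> J"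
      then obtain i where i: "k = g i" unfolding J_def by auto
      show "0 \<le> measure M (Ak k)" by simp
      show "measure M (Ak k) \<le> 1 - p_w e'" unfolding Ak_def
        apply (rule step_bound[OF A(1) A(2) A(15)])
        using A(19) A(18) A(21) e'pos A(16) g(2)[of i] i unfolding W_def by auto
    qed
    also have "\<dots> = (1 - p_w e') ^ K" using inj by (simp add: J_def card_image)
    finally show ?thesis unfolding K_def e'_def .
  qed
qed
end
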